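(* If $v_{j1}^2+v_{j2}^2\neq0$ for $j=1$ or for $j=2$, then none of the points $[1,1,\sqrt{-1}]$, $[1,1,-\sqrt{-1}]$, $[1,-1,\sqrt{-1}]$, $[1,-1,-\sqrt{-1}]$ is a singular point of $V(\mathbf v,d)$.
   Context: Parameters $[\mathbf v,d]=[v_{11},v_{12},v_{21},v_{22},d]\in\mathbb{C}P^4$ (complex, not all zero). On $\mathbb{C}P^2$ with coordinates $[u_0,u_1,u_2]$, $V(\mathbf v,d)$ is the plane quartic $P=0$ where $P=2v_{22}u_0u_2(u_1^2+u_2^2)-2v_{12}u_1u_2(u_0^2+u_2^2)+v_{21}(u_2^2-u_0^2)(u_2^2+u_1^2)-v_{11}(u_2^2-u_1^2)(u_0^2+u_2^2)-d(u_1^2+u_2^2)(u_0^2+u_2^2)$. A point of $V$ is singular if all partial derivatives of $P$ vanish there. *)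

theory Defs
  imports "HOL-Analysis.Analysis"
begin

definition Pq :: "complex \<Rightarrow> complex \<Rightarrow> complex \<Rightarrow> complex \<Rightarrow> complex \<Rightarrow>
                  complex \<Rightarrow> complex \<Rightarrow> complex \<Rightarrow> complex" where
  "Pq v11 v12 v21 v22 d u0 u1 u2 =
     2 * v22 * u0 * u2 * (u1^2 + u2^2)
   - 2 * v12 * u1 * u2 * (u0^2 + u2^2)
   + v21 * (u2^2 - u0^2) * (u2^2 + u1^2)
   - v11 * (u2^2 - u1^2) * (u0^2 + u2^2)
   - d * (u1^2 + u2^2) * (u0^2 + u2^2)"

definition singular_pt :: "complex \<Rightarrow> complex \<Rightarrow> complex \<Rightarrow> complex \<Rightarrow> complex \<Rightarrow>
                  complex \<Rightarrow> complex \<Rightarrow> complex \<Rightarrow> bool" where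
  "singular_pt v11 v12 v21 v22 d u0 u1 u2 \<longleftrightarrow>
     Pq v11 v12 v21 v22 d u0 u1 u2 = 0 \<and>
     deriv (\<lambda>t. Pq v11 v12 v21 v22 d t u1 u2) u0 = 0 \<and>
     deriv (\<lambda>t. Pq v11 v12 v21 v22 d u0 t u2) u1 = 0 \<and>
     deriv (\<lambda>t. Pq v11 v12 v21 v22 d u0 u1 t) u2 = 0"

end

theory Submission
  imports Defs
begin

lemma d0: "deriv (\<lambda>t. Pq a b c e d t u1 u2) u0 =
  2*e*u2*(u1^2+u2^2) - 4*b*u1*u2*u0 - 2*c*u0*(u1^2+u2^2) - 2*a*(u2^2-u1^2)*u0 - 2*d*u0*(u1^2+u2^2)"
  unfolding Pq_def
  by (rule DERIV_imp_deriv, (rule derivative_eq_intros refl)+, simp add: algebra_simps power2_eq_square)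

lemma d1: "deriv (\<lambda>t. Pq a b c e d u0 t u2) u1 =
  4*e*u0*u2*u1 - 2*b*u2*(u0^2+u2^2) + 2*c*(u2^2-u0^2)*u1 + 2*a*u1*(u0^2+u2^2) - 2*d*u1*(u0^2+u2^2)"
  unfolding Pq_def
  by (rule DERIV_imp_deriv, (rule derivative_eq_intros refl)+, simp add: algebra_simps power2_eq_square)

lemma d2: "deriv (\<lambda>t. Pq a b c e d u0 u1 t) u2 =
  2*e*u0*(u1^2+u2^2) + 4*e*u0*u2^2 - 2*b*u1*(u0^2+u2^2) - 4*b*u1*u2^2 + 2*c*u2*(u1^2+u2^2)
  + 2*c*(u2^2-u0^2)*u2 - 2*a*u2*(u0^2+u2^2) - 2*a*(u2^2-u1^2)*u2 - 2*d*u2*(u0^2+u2^2)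
  - 2*d*(u1^2+u2^2)*u2"
  unfolding Pq_def
  by (rule DERIV_imp_deriv, (rule derivative_eq_intros refl)+, simp add: algebra_simps power2_eq_square)

lemma key:
  fixes a b c e d s1 s2 :: complex
  assumes "s1^2 = 1" "s2^2 = -1" "singular_pt a b c e d 1 s1 s2"
  shows "a^2 + b^2 = 0 \<and> c^2 + e^2 = 0"
proof -
  from assms(3) have h0: "deriv (\<lambda>t. Pq a b c e d t s1 s2) 1 = 0"
    and h1: "deriv (\<lambda>t. Pq a b c e d 1 t s2) s1 = 0"
    unfolding singular_pt_def by auto
  have A: "s1^2 + s2^2 = 0" "1 + s2^2 = 0" using assms(1,2) by auto
  from h0 have "- 4*b* s1* s2 - 2*a*(s2^2-s1^2) = 0" unfolding d0 using A by simp
  hence ha: "a = b* s1* s2" using assms(1,2) by (simp add: algebra_simps)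
  from h1 have "4*e* s2* s1 + 2*c*(s2^2-1)* s1 = 0" unfolding d1 using A by (simp add: power2_eq_square)
  hence "s1*(4*e* s2 - 4*c) = 0" using assms(2) by (simp add: algebra_simps)
  moreover have "s1 \<noteq> 0" using assms(1) by auto
  ultimately have hc: "c = e* s2" by simp
  have "a^2 + b^2 = b^2 * (s1^2 * s2^2 + 1)" using ha by (simp add: power_mult_distrib algebra_simps)
  also have "\<dots> = 0" using assms(1,2) by simp
  finally have "a^2+b^2 = 0" .
  moreover have "c^2 + e^2 = e^2*(s2^2+1)" using hc by (simp add: power_mult_distrib algebra_simps)
  ultimately show ?thesis using assms(2) by simp
qed

theorem lemma6p6:
  fixes v11 v12 v21 v22 d :: complex
  assumes "(v11, v12, v21, v22, d) \<noteq> (0, 0, 0, 0, 0)"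
    and "v11^2 + v12^2 \<noteq> 0 \<or> v21^2 + v22^2 \<noteq> 0"
  shows "\<not> singular_pt v11 v12 v21 v22 d 1 1 \<i> \<and>
         \<not> singular_pt v11 v12 v21 v22 d 1 1 (- \<i>) \<and>
         \<not> singular_pt v11 v12 v21 v22 d 1 (-1) \<i> \<and>
         \<not> singular_pt v11 v12 v21 v22 d 1 (-1) (- \<i>)"
  using assms(2) key[of 1 "\<i>"] key[of 1 "-\<i>"] key[of "-1" "\<i>"] key[of "-1" "-\<i>"]
  by auto

end
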